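(* Let $\tau$ be a vocabulary. Every $\Pi^1_1\text{-}\mathrm{KROM}^r(\tau)$ formula $\Phi$ is equivalent (on all finite $\tau$-structures) to a first-order $\tau$-formula of the form $\forall \bar{x}\,\varphi$, where $\varphi$ is a quantifier-free formula in conjunctive normal form (whose literals are atomic or negated atomic $\tau$-formulas, equality included).
   Context: All structures are finite; every vocabulary contains equality. For a vocabulary $\tau$, an SO-KROM$^r(\tau)$ formula is a second-order formula of the form $Q_1R_1\cdots Q_mR_m\forall\bar{x}(C_1\wedge\cdots\wedge C_n)$, where each $Q_i\in\{\forall,\exists\}$, $R_1,\dots,R_m$ are second-order relation variables, and each clause $C_j$ is a disjunction $\beta_1\vee\cdots\vee\beta_q\vee H_1\vee H_2$ in which each $\beta_s$ is an atomic or negated atomic $\tau$-formula $P\bar{y}$ or $\neg P\bar{y}$ ($P\in\tau$, including equality), and each $H_t$ is one of $R_i\bar{z}$, $\neg R_i\bar{z}$, $\exists z_1\cdots\exists z_{r}R_i z_1\dots z_r$ (with $r$ the arity of $R_i$, $1\le i\le m$), or $\bot$. (If the third option is disallowed, the logic is SO-KROM, second-order Krom logic.) $\Sigma^1_k\text{-}\mathrm{KROM}^r$ (resp. $\Pi^1_k\text{-}\mathrm{KROM}^r$) is the set of SO-KROM$^r$ formulas whose second-order quantifier prefix starts with an existential (resp. universal) quantifier and has exactly $k-1$ alternations between blocks of existential and universal quantifiers; similarly $\Sigma^1_k$-KROM, $\Pi^1_k$-KROM for SO-KROM. *)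

theory Defs
  imports Main
begin

text \<open>A vocabulary is a type 'p of relation symbols together with an arity function
  ar. A tau-structure with universe type 'a is a pair (A, I): a universe A and
  an interpretation I P, a set of tuples (lists) of length ar P over A.\<close>

definition rels :: "'a set \<Rightarrow> nat \<Rightarrow> 'a list set" where
  "rels A r = {xs. length xs = r \<and> set xs \<subseteq> A}"

definition finite_structure :: "('p \<Rightarrow> nat) \<Rightarrow> 'a set \<Rightarrow> ('p \<Rightarrow> 'a list set) \<Rightarrow> bool" where
  "finite_structure ar A I \<longleftrightarrow> finite A \<and> A \<noteq> {} \<and> (\<forall>P. I P \<subseteq> rels A (ar P))"

datatype 'p atom = Rel 'p "nat list" | Eq nat nat

datatype 'p lit = Pos "'p atom" | Neg "'p atom"

fun atom_wf :: "('p \<Rightarrow> nat) \<Rightarrow> 'p atom \<Rightarrow> bool" where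
  "atom_wf ar (Rel P ys) \<longleftrightarrow> length ys = ar P"
| "atom_wf ar (Eq x y) \<longleftrightarrow> True"

fun lit_wf :: "('p \<Rightarrow> nat) \<Rightarrow> 'p lit \<Rightarrow> bool" where
  "lit_wf ar (Pos a) \<longleftrightarrow> atom_wf ar a"
| "lit_wf ar (Neg a) \<longleftrightarrow> atom_wf ar a"

fun atom_sem :: "('p \<Rightarrow> 'a list set) \<Rightarrow> (nat \<Rightarrow> 'a) \<Rightarrow> 'p atom \<Rightarrow> bool" where
  "atom_sem I s (Rel P ys) \<longleftrightarrow> map s ys \<in> I P"
| "atom_sem I s (Eq x y) \<longleftrightarrow> s x = s y"

fun lit_sem :: "('p \<Rightarrow> 'a list set) \<Rightarrow> (nat \<Rightarrow> 'a) \<Rightarrow> 'p lit \<Rightarrow> bool" where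
  "lit_sem I s (Pos a) \<longleftrightarrow> atom_sem I s a"
| "lit_sem I s (Neg a) \<longleftrightarrow> \<not> atom_sem I s a"

text \<open>A quantifier-free CNF is a list of clauses, each a list of literals (a
  disjunction). All variables are universally quantified (the sentence
  forall x-bar phi with x-bar the variables of phi).\<close>

type_synonym 'p fo_cnf = "'p lit list list"

definition fo_cnf_wf :: "('p \<Rightarrow> nat) \<Rightarrow> 'p fo_cnf \<Rightarrow> bool" where
  "fo_cnf_wf ar \<phi> \<longleftrightarrow> (\<forall>D\<in>set \<phi>. \<forall>l\<in>set D. lit_wf ar l)"

definition fo_univ_sat :: "'a set \<Rightarrow> ('p \<Rightarrow> 'a list set) \<Rightarrow> 'p fo_cnf \<Rightarrow> bool" where
  "fo_univ_sat A I \<phi> \<longleftrightarrow>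
     (\<forall>s. (\<forall>v. s v \<in> A) \<longrightarrow> (\<forall>D\<in>set \<phi>. \<exists>l\<in>set D. lit_sem I s l))"

text \<open>Second-order variables R_i are referred to by their position i (starting at 0)
  in the quantifier prefix. The H-part of a clause is one of
  R_i z-bar, not R_i z-bar, (exists z_1 ... z_r. R_i z_1 ... z_r), or bottom.\<close>

datatype hlit = HPos nat "nat list" | HNeg nat "nat list" | HEx nat | HBot

text \<open>A clause beta_1 or ... or beta_q or H_1 or H_2.\<close>

type_synonym 'p kclause = "'p lit list \<times> hlit \<times> hlit"

text \<open>A prefix entry (q, r): q = True means universal, False existential; r is the
  arity of the quantified relation variable.\<close>

record 'p sokrom =
  prefix :: "(bool \<times> nat) list"
  clauses :: "'p kclause list"

fun hlit_wf :: "(bool \<times> nat) list \<Rightarrow> hlit \<Rightarrow> bool" where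
  "hlit_wf pre (HPos i zs) \<longleftrightarrow> i < length pre \<and> length zs = snd (pre ! i)"
| "hlit_wf pre (HNeg i zs) \<longleftrightarrow> i < length pre \<and> length zs = snd (pre ! i)"
| "hlit_wf pre (HEx i) \<longleftrightarrow> i < length pre"
| "hlit_wf pre HBot \<longleftrightarrow> True"

definition sokrom_wf :: "('p \<Rightarrow> nat) \<Rightarrow> 'p sokrom \<Rightarrow> bool" where
  "sokrom_wf ar \<Phi> \<longleftrightarrow>
     (\<forall>(bs, h1, h2)\<in>set (clauses \<Phi>).
        (\<forall>l\<in>set bs. lit_wf ar l) \<and> hlit_wf (prefix \<Phi>) h1 \<and> hlit_wf (prefix \<Phi>) h2)"

fun hlit_sem :: "(nat \<Rightarrow> 'a list set) \<Rightarrow> (nat \<Rightarrow> 'a) \<Rightarrow> hlit \<Rightarrow> bool" where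
  "hlit_sem V s (HPos i zs) \<longleftrightarrow> map s zs \<in> V i"
| "hlit_sem V s (HNeg i zs) \<longleftrightarrow> map s zs \<notin> V i"
| "hlit_sem V s (HEx i) \<longleftrightarrow> V i \<noteq> {}"
| "hlit_sem V s HBot \<longleftrightarrow> False"

definition matrix_sat :: "'a set \<Rightarrow> ('p \<Rightarrow> 'a list set) \<Rightarrow> (nat \<Rightarrow> 'a list set)
    \<Rightarrow> 'p kclause list \<Rightarrow> bool" where
  "matrix_sat A I V cs \<longleftrightarrow>
     (\<forall>s. (\<forall>v. s v \<in> A) \<longrightarrow>
        (\<forall>(bs, h1, h2)\<in>set cs.
           (\<exists>l\<in>set bs. lit_sem I s l) \<or> hlit_sem V s h1 \<or> hlit_sem V s h2))"

fun prefix_sat :: "'a set \<Rightarrow> (bool \<times> nat) list \<Rightarrow> nat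
    \<Rightarrow> ((nat \<Rightarrow> 'a list set) \<Rightarrow> bool) \<Rightarrow> (nat \<Rightarrow> 'a list set) \<Rightarrow> bool" where
  "prefix_sat A [] i M V \<longleftrightarrow> M V"
| "prefix_sat A ((q, r) # qs) i M V \<longleftrightarrow>
     (if q then (\<forall>R. R \<subseteq> rels A r \<longrightarrow> prefix_sat A qs (Suc i) M (V(i := R)))
      else (\<exists>R. R \<subseteq> rels A r \<and> prefix_sat A qs (Suc i) M (V(i := R))))"

definition sokrom_sat :: "'a set \<Rightarrow> ('p \<Rightarrow> 'a list set) \<Rightarrow> 'p sokrom \<Rightarrow> bool" where
  "sokrom_sat A I \<Phi> \<longleftrightarrow>
     prefix_sat A (prefix \<Phi>) 0 (\<lambda>V. matrix_sat A I V (clauses \<Phi>)) (\<lambda>_. {})"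

text \<open>Pi^1_1-KROM^r: the prefix starts with a universal quantifier and has no
  alternations, i.e. it is a nonempty block of universal quantifiers.\<close>

definition Pi11_krom_r :: "('p \<Rightarrow> nat) \<Rightarrow> 'p sokrom \<Rightarrow> bool" where
  "Pi11_krom_r ar \<Phi> \<longleftrightarrow> sokrom_wf ar \<Phi> \<and> prefix \<Phi> \<noteq> [] \<and> (\<forall>qr\<in>set (prefix \<Phi>). fst qr)"

end

theory Submission
  imports Defs
begin

fun hk :: "hlit \<Rightarrow> hlit \<Rightarrow> (nat \<times> nat) list list" where
  "hk (HPos i zs) (HNeg j ws) = (if i = j then map (\<lambda>p. [p]) (zip zs ws) else [[]])"
| "hk (HNeg j ws) (HPos i zs) = (if i = j then map (\<lambda>p. [p]) (zip zs ws) else [[]])"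
| "hk (HNeg i zs) (HEx j) = (if i = j then [] else [[]])"
| "hk (HEx j) (HNeg i zs) = (if i = j then [] else [[]])"
| "hk _ _ = [[]]"

definition adm :: "(bool \<times> nat) list \<Rightarrow> 'a set \<Rightarrow> (nat \<Rightarrow> 'a list set) \<Rightarrow> bool" where
  "adm pre A V \<longleftrightarrow> (\<forall>i<length pre. V i \<subseteq> rels A (snd (pre ! i))) \<and> (\<forall>j\<ge>length pre. V j = {})"

lemma map_eq_zip:
  "length zs = length ws \<Longrightarrow> (map s zs = map s ws) \<longleftrightarrow> (\<forall>(z,w)\<in>set (zip zs ws). s z = s w)"
proof (induction zs arbitrary: ws)
  case Nil thus ?case by simp
next
  case (Cons a zs) thus ?case by (cases ws) auto
qed

lemma rels_in: "length xs = r \<Longrightarrow> (\<forall>v. s v \<in> A) \<Longrightarrow> map s xs \<in> rels A r"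
  by (auto simp: rels_def)

lemma rels_ne: "A \<noteq> {} \<Longrightarrow> rels A r \<noteq> {}"
proof -
  assume "A \<noteq> {}" then obtain a where "a \<in> A" by blast
  hence "replicate r a \<in> rels A r" by (auto simp: rels_def)
  thus ?thesis by blast
qed

lemma key:
  assumes w1: "hlit_wf pre h1" and w2: "hlit_wf pre h2" and A: "A \<noteq> {}" and s: "\<forall>v. s v \<in> A"
  shows "(\<forall>V. adm pre A V \<longrightarrow> hlit_sem V s h1 \<or> hlit_sem V s h2) \<longleftrightarrow>
         (\<forall>c\<in>set (hk h1 h2). \<exists>p\<in>set c. s (fst p) = s (snd p))"
proof -
  define m where "m = length pre"
  define V0 :: "nat \<Rightarrow> 'a list set" where "V0 = (\<lambda>_. {})"
  define Vall :: "nat \<Rightarrow> 'a list set" where "Vall = (\<lambda>k. if k < m then rels A (snd (pre ! k)) else {})"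
  define Vf :: "nat \<Rightarrow> nat \<Rightarrow> 'a list set" where "Vf = (\<lambda>i. (\<lambda>_. {})(i := rels A (snd (pre ! i))))"
  define Vs :: "nat \<Rightarrow> 'a list \<Rightarrow> nat \<Rightarrow> 'a list set" where "Vs = (\<lambda>i x. (\<lambda>_. {})(i := {x}))"
  have a0: "adm pre A V0" by (simp add: adm_def V0_def)
  have aall: "adm pre A Vall" by (simp add: adm_def Vall_def m_def)
  have af: "i < m \<Longrightarrow> adm pre A (Vf i)" for i by (auto simp: adm_def Vf_def m_def)
  have as: "i < m \<Longrightarrow> x \<in> rels A (snd (pre ! i)) \<Longrightarrow> adm pre A (Vs i x)" for i x
    by (auto simp: adm_def Vs_def m_def)
  have rn: "rels A r \<noteq> {}" for r using rels_ne[OF A] .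
  show ?thesis
  proof (cases h1)
    case (HPos i zs)
    note h1 = this
    show ?thesis
    proof (cases h2)
      case (HPos j ws) thus ?thesis using h1 a0 by (auto simp: V0_def)
    next
      case (HNeg j ws)
      show ?thesis
      proof (cases "i = j")
        case True
        have l: "length zs = length ws" using w1 w2 h1 HNeg True by simp
        have mw: "map s ws \<in> rels A (snd (pre ! i))" using w2 HNeg True s by (auto simp: rels_def)
        have im: "i < m" using w1 h1 m_def by simp
        show ?thesis
        proof
          assume H: "\<forall>V. adm pre A V \<longrightarrow> hlit_sem V s h1 \<or> hlit_sem V s h2"
          have "hlit_sem (Vs i (map s ws)) s h1 \<or> hlit_sem (Vs i (map s ws)) s h2"
            using H as[OF im mw] by blast
          hence "map s zs = map s ws" using h1 HNeg True by (auto simp: Vs_def)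
          hence "\<forall>(z,w)\<in>set (zip zs ws). s z = s w" using map_eq_zip[OF l] by blast
          thus "\<forall>c\<in>set (hk h1 h2). \<exists>p\<in>set c. s (fst p) = s (snd p)"
            using h1 HNeg True by auto
        next
          assume "\<forall>c\<in>set (hk h1 h2). \<exists>p\<in>set c. s (fst p) = s (snd p)"
          hence "\<forall>(z,w)\<in>set (zip zs ws). s z = s w" using h1 HNeg True by auto
          hence "map s zs = map s ws" using map_eq_zip[OF l] by blast
          thus "\<forall>V. adm pre A V \<longrightarrow> hlit_sem V s h1 \<or> hlit_sem V s h2"
            using h1 HNeg True by auto
        qed
      next
        case False
        have jm: "j < m" using w2 HNeg m_def by simp
        have "map s ws \<in> rels A (snd (pre ! j))" using w2 HNeg s by (auto simp: rels_def)
        thus ?thesis using False h1 HNeg af[OF jm] by (auto simp: Vf_def)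
      qed
    next
      case (HEx j) thus ?thesis using h1 a0 by (auto simp: V0_def)
    next
      case HBot thus ?thesis using h1 a0 by (auto simp: V0_def)
    qed
  next
    case (HNeg i zs)
    note h1 = this
    have im: "i < m" using w1 h1 m_def by simp
    have mz: "map s zs \<in> rels A (snd (pre ! i))" using w1 h1 s by (auto simp: rels_def)
    show ?thesis
    proof (cases h2)
      case (HPos j ws)
      show ?thesis
      proof (cases "i = j")
        case True
        have l: "length ws = length zs" using w1 w2 h1 HPos True by simp
        show ?thesis
        proof
          assume H: "\<forall>V. adm pre A V \<longrightarrow> hlit_sem V s h1 \<or> hlit_sem V s h2"
          have "hlit_sem (Vs i (map s zs)) s h1 \<or> hlit_sem (Vs i (map s zs)) s h2"
            using H as[OF im mz] by blast
          hence "map s ws = map s zs" using h1 HPos True by (auto simp: Vs_def)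
          hence "\<forall>(z,w)\<in>set (zip ws zs). s z = s w" using map_eq_zip[OF l] by blast
          thus "\<forall>c\<in>set (hk h1 h2). \<exists>p\<in>set c. s (fst p) = s (snd p)"
            using h1 HPos True by auto
        next
          assume "\<forall>c\<in>set (hk h1 h2). \<exists>p\<in>set c. s (fst p) = s (snd p)"
          hence "\<forall>(z,w)\<in>set (zip ws zs). s z = s w" using h1 HPos True by auto
          hence "map s ws = map s zs" using map_eq_zip[OF l] by blast
          thus "\<forall>V. adm pre A V \<longrightarrow> hlit_sem V s h1 \<or> hlit_sem V s h2"
            using h1 HPos True by auto
        qed
      next
        case False
        thus ?thesis using h1 HPos af[OF im] mz by (auto simp: Vf_def)
      qed
    next
      case (HNeg j ws)
      have jm: "j < m" using w2 HNeg m_def by simp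
      have mw: "map s ws \<in> rels A (snd (pre ! j))" using w2 HNeg s by (auto simp: rels_def)
      show ?thesis using h1 HNeg aall im jm mz mw by (auto simp: Vall_def)
    next
      case (HEx j)
      show ?thesis
      proof (cases "i = j")
        case True thus ?thesis using h1 HEx by auto
      next
        case False thus ?thesis using h1 HEx af[OF im] mz by (auto simp: Vf_def)
      qed
    next
      case HBot thus ?thesis using h1 aall im mz by (auto simp: Vall_def)
    qed
  next
    case (HEx i)
    note h1 = this
    have im: "i < m" using w1 h1 m_def by simp
    show ?thesis
    proof (cases h2)
      case (HPos j ws) thus ?thesis using h1 a0 by (auto simp: V0_def)
    next
      case (HNeg j ws)
      have jm: "j < m" using w2 HNeg m_def by simp
      have mw: "map s ws \<in> rels A (snd (pre ! j))" using w2 HNeg s by (auto simp: rels_def)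
      show ?thesis
      proof (cases "j = i")
        case True thus ?thesis using h1 HNeg by auto
      next
        case False thus ?thesis using h1 HNeg af[OF jm] mw by (auto simp: Vf_def)
      qed
    next
      case (HEx j) thus ?thesis using h1 a0 by (auto simp: V0_def)
    next
      case HBot thus ?thesis using h1 a0 by (auto simp: V0_def)
    qed
  next
    case HBot
    note h1 = this
    show ?thesis
    proof (cases h2)
      case (HPos j ws) thus ?thesis using h1 a0 by (auto simp: V0_def)
    next
      case (HNeg j ws)
      have jm: "j < m" using w2 HNeg m_def by simp
      have mw: "map s ws \<in> rels A (snd (pre ! j))" using w2 HNeg s by (auto simp: rels_def)
      show ?thesis using h1 HNeg aall jm mw by (auto simp: Vall_def)
    next
      case (HEx j) thus ?thesis using h1 a0 by (auto simp: V0_def)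
    next
      case HBot thus ?thesis using h1 a0 by (auto simp: V0_def)
    qed
  qed
qed

lemma prefix_univ:
  assumes "\<forall>qr\<in>set pre. fst qr"
  shows "prefix_sat A pre k M V \<longleftrightarrow>
    (\<forall>V'. (\<forall>i<length pre. V' (k+i) \<subseteq> rels A (snd (pre ! i))) \<and>
          (\<forall>j. (j < k \<or> j \<ge> k + length pre) \<longrightarrow> V' j = V j) \<longrightarrow> M V')"
  using assms
proof (induction pre arbitrary: k V)
  case Nil
  show ?case
  proof
    assume "prefix_sat A [] k M V"
    hence MV: "M V" by simp
    show "\<forall>V'. (\<forall>i<length []. V' (k+i) \<subseteq> rels A (snd ([] ! i))) \<and>
          (\<forall>j. (j < k \<or> j \<ge> k + length []) \<longrightarrow> V' j = V j) \<longrightarrow> M V'"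
    proof (intro allI impI)
      fix V' assume "(\<forall>i<length []. V' (k+i) \<subseteq> rels A (snd ([] ! i))) \<and>
          (\<forall>j. (j < k \<or> j \<ge> k + length []) \<longrightarrow> V' j = V j)"
      hence "V' = V" by (auto intro!: ext simp: not_less)
      thus "M V'" using MV by simp
    qed
  next
    assume "\<forall>V'. (\<forall>i<length []. V' (k+i) \<subseteq> rels A (snd ([] ! i))) \<and>
          (\<forall>j. (j < k \<or> j \<ge> k + length []) \<longrightarrow> V' j = V j) \<longrightarrow> M V'"
    thus "prefix_sat A [] k M V" by auto
  qed
next
  case (Cons qr qs)
  obtain q r where qr: "qr = (q, r)" by (cases qr)
  have q: "q" using Cons.prems qr by auto
  have ih: "\<And>k V. prefix_sat A qs k M V \<longleftrightarrow>
    (\<forall>V'. (\<forall>i<length qs. V' (k+i) \<subseteq> rels A (snd (qs ! i))) \<and>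
          (\<forall>j. (j < k \<or> j \<ge> k + length qs) \<longrightarrow> V' j = V j) \<longrightarrow> M V')"
    using Cons by auto
  show ?case
  proof
    assume H: "prefix_sat A (qr # qs) k M V"
    show "\<forall>V'. (\<forall>i<length (qr#qs). V' (k+i) \<subseteq> rels A (snd ((qr#qs) ! i))) \<and>
          (\<forall>j. (j < k \<or> j \<ge> k + length (qr#qs)) \<longrightarrow> V' j = V j) \<longrightarrow> M V'"
    proof (intro allI impI)
      fix V' assume V': "(\<forall>i<length (qr#qs). V' (k+i) \<subseteq> rels A (snd ((qr#qs) ! i))) \<and>
          (\<forall>j. (j < k \<or> j \<ge> k + length (qr#qs)) \<longrightarrow> V' j = V j)"
      have R: "V' k \<subseteq> rels A r" using V' qr by (metis add_0_right length_Cons nth_Cons_0 snd_conv zero_less_Suc)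
      have "prefix_sat A qs (Suc k) M (V(k := V' k))" using H q qr R by simp
      moreover have "\<forall>i<length qs. V' (Suc k+i) \<subseteq> rels A (snd (qs ! i))"
      proof (intro allI impI)
        fix i assume "i < length qs"
        thus "V' (Suc k+i) \<subseteq> rels A (snd (qs ! i))" using V' by (metis add_Suc_shift length_Cons not_less_eq nth_Cons_Suc add_Suc)
      qed
      moreover have "\<forall>j. (j < Suc k \<or> j \<ge> Suc k + length qs) \<longrightarrow> V' j = (V(k := V' k)) j"
        using V' by auto
      ultimately show "M V'" using ih by blast
    qed
  next
    assume H: "\<forall>V'. (\<forall>i<length (qr#qs). V' (k+i) \<subseteq> rels A (snd ((qr#qs) ! i))) \<and>
          (\<forall>j. (j < k \<or> j \<ge> k + length (qr#qs)) \<longrightarrow> V' j = V j) \<longrightarrow> M V'"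
    show "prefix_sat A (qr # qs) k M V"
      unfolding qr using q
    proof (simp, intro allI impI)
      fix R assume R: "R \<subseteq> rels A r"
      show "prefix_sat A qs (Suc k) M (V(k := R))"
        unfolding ih
      proof (intro allI impI)
        fix V' assume V': "(\<forall>i<length qs. V' (Suc k + i) \<subseteq> rels A (snd (qs ! i))) \<and>
          (\<forall>j. j < Suc k \<or> Suc k + length qs \<le> j \<longrightarrow> V' j = (V(k := R)) j)"
        have "\<forall>i<length (qr#qs). V' (k+i) \<subseteq> rels A (snd ((qr#qs) ! i))"
        proof (intro allI impI)
          fix i assume i: "i < length (qr#qs)"
          show "V' (k+i) \<subseteq> rels A (snd ((qr#qs) ! i))"
          proof (cases i)
            case 0 thus ?thesis using V' R qr by auto
          next
            case (Suc i') thus ?thesis using V' i by auto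
          qed
        qed
        moreover have "\<forall>j. (j < k \<or> j \<ge> k + length (qr#qs)) \<longrightarrow> V' j = V j" using V' by auto
        ultimately show "M V'" using H by blast
      qed
    qed
  qed
qed

definition tr :: "'p kclause \<Rightarrow> 'p fo_cnf" where
  "tr c = (case c of (bs, h1, h2) \<Rightarrow> map (\<lambda>e. bs @ map (\<lambda>p. Pos (Eq (fst p) (snd p))) e) (hk h1 h2))"

lemma matrix_alt:
  "matrix_sat A I V cs \<longleftrightarrow> (\<forall>s. (\<forall>v. s v \<in> A) \<longrightarrow> (\<forall>c\<in>set cs.
     (\<exists>l\<in>set (fst c). lit_sem I s l) \<or> hlit_sem V s (fst (snd c)) \<or> hlit_sem V s (snd (snd c))))"
  by (simp add: matrix_sat_def split_def)

lemma swap_q: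
  "(\<forall>V. P V \<longrightarrow> (\<forall>s. Q s \<longrightarrow> (\<forall>c\<in>S. B s c \<or> H V s c))) \<longleftrightarrow>
   (\<forall>s. Q s \<longrightarrow> (\<forall>c\<in>S. B s c \<or> (\<forall>V. P V \<longrightarrow> H V s c)))"
  by blast

lemma fo_alt:
  "fo_univ_sat A I (concat (map tr cs)) \<longleftrightarrow> (\<forall>s. (\<forall>v. s v \<in> A) \<longrightarrow> (\<forall>c\<in>set cs.
     (\<exists>l\<in>set (fst c). lit_sem I s l) \<or>
     (\<forall>e\<in>set (hk (fst (snd c)) (snd (snd c))). \<exists>p\<in>set e. s (fst p) = s (snd p))))"
proof -
  have e: "(\<forall>D\<in>set (tr c). \<exists>l\<in>set D. lit_sem I s l) \<longleftrightarrow>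
     ((\<exists>l\<in>set (fst c). lit_sem I s l) \<or>
     (\<forall>e\<in>set (hk (fst (snd c)) (snd (snd c))). \<exists>p\<in>set e. s (fst p) = s (snd p)))" for s c
  proof -
    have L: "(\<exists>x\<in>set bs \<union> f ` set D. P x) \<longleftrightarrow> (\<exists>x\<in>set bs. P x) \<or> (\<exists>p\<in>set D. P (f p))"
      for bs D and f :: "nat \<times> nat \<Rightarrow> 'p lit" and P by blast
    show ?thesis by (cases c) (auto simp: tr_def L)
  qed
  show ?thesis unfolding fo_univ_sat_def using e by auto
qed

theorem proposition2p1:
  fixes ar :: "'p \<Rightarrow> nat" and \<Phi> :: "'p sokrom"
  assumes "Pi11_krom_r ar \<Phi>"
  shows "\<exists>\<phi> :: 'p fo_cnf. fo_cnf_wf ar \<phi> \<and>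
           (\<forall>(A :: nat set) I. finite_structure ar A I \<longrightarrow>
              (sokrom_sat A I \<Phi> \<longleftrightarrow> fo_univ_sat A I \<phi>))"
proof -
  let ?pre = "prefix \<Phi>" and ?cs = "clauses \<Phi>"
  have wf: "sokrom_wf ar \<Phi>" and univ: "\<forall>qr\<in>set ?pre. fst qr" using assms by (auto simp: Pi11_krom_r_def)
  define \<phi> where "\<phi> = concat (map tr ?cs)"
  have "fo_cnf_wf ar \<phi>"
    using wf unfolding fo_cnf_wf_def \<phi>_def sokrom_wf_def tr_def by fastforce
  moreover have "sokrom_sat A I \<Phi> \<longleftrightarrow> fo_univ_sat A I \<phi>" if fs: "finite_structure ar A I" for A :: "nat set" and I
  proof -
    have A: "A \<noteq> {}" using fs by (simp add: finite_structure_def)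
    have adm_eq: "(\<forall>i<length ?pre. V (0+i) \<subseteq> rels A (snd (?pre ! i))) \<and>
          (\<forall>j. (j < 0 \<or> j \<ge> 0 + length ?pre) \<longrightarrow> V j = (\<lambda>_. {}) j) \<longleftrightarrow> adm ?pre A V" for V :: "nat \<Rightarrow> nat list set"
      by (auto simp: adm_def)
    have "sokrom_sat A I \<Phi> \<longleftrightarrow> (\<forall>V. adm ?pre A V \<longrightarrow> matrix_sat A I V ?cs)"
      unfolding sokrom_sat_def prefix_univ[OF univ] adm_eq by simp
    also have "\<dots> \<longleftrightarrow> (\<forall>s. (\<forall>v. s v \<in> A) \<longrightarrow> (\<forall>c\<in>set ?cs.
           (\<exists>l\<in>set (fst c). lit_sem I s l) \<or> (\<forall>V. adm ?pre A V \<longrightarrow> hlit_sem V s (fst (snd c)) \<or> hlit_sem V s (snd (snd c)))))"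
      unfolding matrix_alt by (rule swap_q)
    also have "\<dots> \<longleftrightarrow> (\<forall>s. (\<forall>v. s v \<in> A) \<longrightarrow> (\<forall>c\<in>set ?cs.
           (\<exists>l\<in>set (fst c). lit_sem I s l) \<or> (\<forall>e\<in>set (hk (fst (snd c)) (snd (snd c))). \<exists>p\<in>set e. s (fst p) = s (snd p))))"
    proof -
      have K: "(\<forall>V. adm ?pre A V \<longrightarrow> hlit_sem V s (fst (snd c)) \<or> hlit_sem V s (snd (snd c))) \<longleftrightarrow>
         (\<forall>e\<in>set (hk (fst (snd c)) (snd (snd c))). \<exists>p\<in>set e. s (fst p) = s (snd p))"
        if s: "\<forall>v. s v \<in> A" and c: "c \<in> set ?cs" for s :: "nat \<Rightarrow> nat" and c
      proof -
        have "hlit_wf ?pre (fst (snd c))" "hlit_wf ?pre (snd (snd c))" using wf c unfolding sokrom_wf_def by (auto simp: split_def)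
        thus ?thesis using key[OF _ _ A s] by blast
      qed
      show ?thesis
        apply (rule all_cong1, rule imp_cong[OF refl], rule ball_cong[OF refl])
        using K by simp
    qed
    also have "\<dots> \<longleftrightarrow> fo_univ_sat A I \<phi>"
      unfolding \<phi>_def fo_alt ..
    finally show ?thesis .
  qed
  ultimately show ?thesis by blast
qed

end
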